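(* For integers $n\geq 3$, $m\geq 1$ and $p\geq 2$, $$\chi_\rho(FSSD_m(C_n\star P_p)) \leq \begin{cases} 6, & n=3,\\ 7, & n\geq 4,\ n\notin\{5,7,11\},\\ 8, & n\in\{5,7,11\}.\end{cases}$$
   Context: All graphs are finite and simple. For a positive integer $i$, an $i$-packing in a graph is a set of vertices any two distinct members of which are at distance greater than $i$. The packing chromatic number $\chi_\rho(H)$ is the smallest $k$ such that $V(H)$ can be partitioned into sets $V_1,\dots,V_k$ with each $V_i$ an $i$-packing. For a positive integer $m$, $FSSD_m(G)$ is obtained from $G$ by replacing each edge $xy$ by a copy of $K_{2,m}$: the edge $xy$ is deleted and $m$ new vertices are added, each adjacent to exactly $x$ and $y$. The neighborhood corona $G\star H$ of graphs $G$ (with vertices $w_1,\dots,w_{n}$) and $H$ consists of one copy of $G$ and $n$ copies $H_1,\dots,H_n$ of $H$ (each retaining the edges of $H$), where every vertex of $H_i$ is additionally joined to every neighbor of $w_i$ in $G$. $C_n$ is the cycle and $P_p$ the path on $p$ vertices. *)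

theory Defs
  imports Main "HOL-Library.Extended_Nat"
begin

text \<open>A (simple) graph is a vertex set together with a symmetric, irreflexive
adjacency relation (the constructions below only produce such graphs).\<close>
type_synonym 'a graph = "'a set \<times> ('a \<Rightarrow> 'a \<Rightarrow> bool)"

definition verts :: "'a graph \<Rightarrow> 'a set" where "verts G = fst G"
definition adj :: "'a graph \<Rightarrow> 'a \<Rightarrow> 'a \<Rightarrow> bool" where "adj G = snd G"

definition walk_of_len :: "'a graph \<Rightarrow> 'a \<Rightarrow> 'a \<Rightarrow> nat \<Rightarrow> bool" where
  "walk_of_len G u v n \<longleftrightarrow> (\<exists>xs. length xs = Suc n \<and> set xs \<subseteq> verts G \<and>
      hd xs = u \<and> last xs = v \<and> (\<forall>i<n. adj G (xs ! i) (xs ! Suc i)))"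

text \<open>Distance (infinite if there is no path).\<close>
definition gdist :: "'a graph \<Rightarrow> 'a \<Rightarrow> 'a \<Rightarrow> enat" where
  "gdist G u v = (INF n \<in> {n. walk_of_len G u v n}. enat n)"

definition is_packing :: "'a graph \<Rightarrow> nat \<Rightarrow> 'a set \<Rightarrow> bool" where
  "is_packing G i S \<longleftrightarrow> S \<subseteq> verts G \<and>
     (\<forall>u\<in>S. \<forall>v\<in>S. u \<noteq> v \<longrightarrow> gdist G u v > enat i)"

text \<open>A partition of V into V_1..V_k (possibly empty parts) with V_i an i-packing,
  encoded by the colour function c (V_i = c^{-1}(i)).\<close>
definition packing_coloring :: "'a graph \<Rightarrow> nat \<Rightarrow> ('a \<Rightarrow> nat) \<Rightarrow> bool" where
  "packing_coloring G k c \<longleftrightarrow> (\<forall>v\<in>verts G. c v \<in> {1..k}) \<and>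
     (\<forall>i\<in>{1..k}. is_packing G i {v\<in>verts G. c v = i})"

definition packing_chromatic_number :: "'a graph \<Rightarrow> nat" where
  "packing_chromatic_number G = (LEAST k. \<exists>c. packing_coloring G k c)"

definition cycle_graph :: "nat \<Rightarrow> nat graph" where
  "cycle_graph n = ({0..<n}, \<lambda>i j. i < n \<and> j < n \<and> (j = Suc i mod n \<or> i = Suc j mod n))"

definition path_graph :: "nat \<Rightarrow> nat graph" where
  "path_graph p = ({0..<p}, \<lambda>i j. i < p \<and> j < p \<and> (j = Suc i \<or> i = Suc j))"

text \<open>Neighborhood corona: Inl w is the vertex w of G, Inr (i,h) is vertex h of the copy H_i.\<close>
definition nbhd_corona :: "'a graph \<Rightarrow> 'b graph \<Rightarrow> ('a + 'a \<times> 'b) graph" where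
  "nbhd_corona G H =
    (Inl ` verts G \<union> Inr ` (verts G \<times> verts H),
     \<lambda>x y. (\<exists>a b. x = Inl a \<and> y = Inl b \<and> a \<in> verts G \<and> b \<in> verts G \<and> adj G a b)
         \<or> (\<exists>a i h. x = Inl a \<and> y = Inr (i, h) \<and> a \<in> verts G \<and> i \<in> verts G \<and> h \<in> verts H \<and> adj G a i)
         \<or> (\<exists>a i h. y = Inl a \<and> x = Inr (i, h) \<and> a \<in> verts G \<and> i \<in> verts G \<and> h \<in> verts H \<and> adj G a i)
         \<or> (\<exists>i h h'. x = Inr (i, h) \<and> y = Inr (i, h') \<and> i \<in> verts G \<and> h \<in> verts H \<and> h' \<in> verts H
                        \<and> adj H h h'))"

text \<open>FSSD_m: each edge {x,y} is replaced by m new vertices Inr ({x,y}, j), j < m,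
  each adjacent exactly to Inl x and Inl y; the original edges are deleted.\<close>
definition fssd :: "nat \<Rightarrow> 'a graph \<Rightarrow> ('a + 'a set \<times> nat) graph" where
  "fssd m G =
    (Inl ` verts G \<union> {Inr ({x, y}, j) | x y j. x \<in> verts G \<and> y \<in> verts G \<and> adj G x y \<and> j < m},
     \<lambda>u v. \<exists>x y j. x \<in> verts G \<and> y \<in> verts G \<and> adj G x y \<and> j < m \<and>
        ((u = Inl x \<and> v = Inr ({x, y}, j)) \<or> (v = Inl x \<and> u = Inr ({x, y}, j))))"

end

theory Submission
  imports Defs
begin


definition colf :: "nat list \<Rightarrow> nat \<Rightarrow> nat" where
  "colf T i = (if i < length T then T!i else 4 + (i - length T) mod 4)"

definition Wp :: "nat \<Rightarrow> (nat \<Rightarrow> nat) \<Rightarrow> bool" where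
  "Wp n f \<longleftrightarrow> (\<forall>a<n. \<forall>d. 1 \<le> d \<and> d \<le> 4 \<longrightarrow> (a+d) mod n \<noteq> a \<longrightarrow> f a = f ((a+d) mod n) \<longrightarrow> f a < 2*d)"

definition Wl :: "nat list \<Rightarrow> bool" where
  "Wl w \<longleftrightarrow> list_all (\<lambda>a. list_all (\<lambda>d. (a+d) mod length w \<noteq> a \<longrightarrow> w!a = w!((a+d) mod length w) \<longrightarrow> w!a < 2*d) [1..<5]) [0..<length w]"

lemma Wl_Wp: "Wl w \<Longrightarrow> Wp (length w) (\<lambda>i. w!i)"
  unfolding Wl_def Wp_def list_all_iff by auto

definition chk :: "nat list \<Rightarrow> bool" where
  "chk T \<longleftrightarrow> list_all (\<lambda>x. 4 \<le> x \<and> x \<le> 7) T \<and>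
    list_all (\<lambda>a. list_all (\<lambda>d. (a + d < length T \<longrightarrow> T!a = T!(a+d) \<longrightarrow> T!a < 2*d) \<and>
        (length T \<le> a + d \<longrightarrow> T!a = 4 + (a+d-length T) \<longrightarrow> T!a < 2*d)) [1..<5]) [0..<length T] \<and>
    list_all (\<lambda>j. list_all (\<lambda>d. j \<le> d \<longrightarrow> 4 + (4-j) mod 4 = colf T (d-j) \<longrightarrow> 4 + (4-j) mod 4 < 2*d) [1..<5]) [1..<5]"

lemma mod4_lem: "(x::nat) mod 4 = (x + d) mod 4 \<Longrightarrow> 1 \<le> d \<and> d \<le> 4 \<Longrightarrow> d = 4"
proof -
  assume h: "x mod 4 = (x + d) mod 4" and d: "1 \<le> d \<and> d \<le> 4"
  have "(4::nat) dvd (x + d) - x" using mod_eq_dvd_iff_nat[of x "x+d" 4] h by simp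
  then have "(4::nat) dvd d" by simp
  then obtain q where "d = 4 * q" by (elim dvdE)
  with d show "d = 4" by simp
qed
lemma chk_Wp:
  assumes c: "chk T" and k: "k \<ge> 1"
  shows "Wp (length T + 4*k) (colf T)"
  unfolding Wp_def
proof (intro allI impI)
  fix a d
  define L where "L = length T"
  define n where "n = L + 4*k"
  assume a: "a < length T + 4*k" and d: "1 \<le> d \<and> d \<le> 4"
    and ne: "(a + d) mod (length T + 4 * k) \<noteq> a"
    and eq: "colf T a = colf T ((a + d) mod (length T + 4 * k))"
  have a': "a < n" using a by (simp add: n_def L_def)
  have cc: "(\<forall>x\<in>set T. 4 \<le> x \<and> x \<le> 7) \<and>
    (\<forall>a\<in>set [0..<length T]. \<forall>d\<in>set [1..<5]. (a + d < length T \<longrightarrow> T!a = T!(a+d) \<longrightarrow> T!a < 2*d) \<and>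
        (length T \<le> a + d \<longrightarrow> T!a = 4 + (a+d-length T) \<longrightarrow> T!a < 2*d)) \<and>
    (\<forall>j\<in>set [1..<5]. \<forall>d\<in>set [1..<5]. j \<le> d \<longrightarrow> 4 + (4-j) mod 4 = colf T (d-j) \<longrightarrow> 4 + (4-j) mod 4 < 2*d)"
    using c unfolding chk_def list_all_iff by blast
  have dd: "d \<in> set [1..<5]" using d by auto
  have c12: "\<And>a. a < L \<Longrightarrow> (a + d < L \<longrightarrow> T!a = T!(a+d) \<longrightarrow> T!a < 2*d) \<and>
        (L \<le> a + d \<longrightarrow> T!a = 4 + (a+d-L) \<longrightarrow> T!a < 2*d)"
  proof -
    fix a assume "a < L"
    then have "a \<in> set [0..<length T]" by (simp add: L_def)
    then show "?thesis a" using cc dd unfolding L_def by blast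
  qed
  have c3: "\<And>j. 1 \<le> j \<Longrightarrow> j \<le> 4 \<Longrightarrow> j \<le> d \<Longrightarrow> 4 + (4-j) mod 4 = colf T (d-j) \<Longrightarrow> 4 + (4-j) mod 4 < 2*d"
  proof -
    fix j assume "1 \<le> j" "j \<le> 4" "j \<le> d" "4 + (4-j) mod 4 = colf T (d-j)"
    moreover have "j \<in> set [1..<5]" using \<open>1 \<le> j\<close> \<open>j \<le> 4\<close> by auto
    ultimately show "4 + (4-j) mod 4 < 2*d" using cc dd by blast
  qed
  show "colf T a < 2 * d"
  proof (cases "a + d < n")
    case True
    then have m: "(a + d) mod n = a + d" by simp
    have eq2: "colf T a = colf T (a + d)" using eq m by (simp add: n_def L_def)
    show ?thesis
    proof (cases "a < L")
      case aL: True
      show ?thesis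
      proof (cases "a + d < L")
        case True
        then show ?thesis using c12[OF aL] eq2 by (auto simp: colf_def L_def)
      next
        case False
        have "a + d - L < 4" using aL d by linarith
        then have "colf T (a + d) = 4 + (a + d - L)" using False by (simp add: colf_def L_def)
        then show ?thesis using c12[OF aL] eq2 False aL by (auto simp: colf_def L_def)
      qed
    next
      case False
      then have "colf T a = 4 + (a - L) mod 4" "colf T (a+d) = 4 + (a + d - L) mod 4"
        by (auto simp: colf_def L_def)
      with eq2 have e: "(a - L) mod 4 = (a + d - L) mod 4" by simp
      have "a + d - L = (a - L) + d" using False by simp
      with e have "(a - L) mod 4 = ((a - L) + d) mod 4" by simp
      then have "d = 4" using d by (rule mod4_lem)
      then show ?thesis using \<open>colf T a = 4 + (a - L) mod 4\<close> by simp
    qed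
  next
    case False
    define j where "j = n - a"
    have j: "1 \<le> j" "j \<le> d" using a' False by (auto simp: j_def)
    have m: "(a + d) mod n = d - j" 
    proof -
      have "a + d = n + (d - j)" using a' False j_def by simp
      moreover have "d - j < n" using d j n_def k by simp
      ultimately show ?thesis by simp
    qed
    have aL: "\<not> a < L" using j d a' n_def k j_def by simp
    have "a - L = 4 * (k - 1) + (4 - j)" using j d a' n_def k j_def by simp
    then have "(a - L) mod 4 = (4 - j) mod 4" by simp
    then have ca: "colf T a = 4 + (4 - j) mod 4" using aL by (simp add: colf_def L_def)
    have "colf T a = colf T (d - j)" using eq m by (simp add: n_def L_def)
    then show ?thesis using c3[OF j(1) _ j(2)] j d ca by auto
  qed
qed

definition w3 :: "nat list" where "w3 = [4,5,6]"
definition w5 :: "nat list" where "w5 = [4,5,6,7,8]"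
definition w7 :: "nat list" where "w7 = [4,5,6,4,5,7,8]"
definition w11 :: "nat list" where "w11 = [4,5,6,4,5,7,4,5,6,7,8]"
definition T6 :: "nat list" where "T6 = [4,5,6,4,5,7]"
definition T9 :: "nat list" where "T9 = [4,5,6,4,7,5,4,6,7]"
definition T15 :: "nat list" where "T15 = [4,5,6,4,5,7,4,5,6,4,7,5,4,6,7]"

lemma Wl_all: "Wl w3" "Wl w5" "Wl w7" "Wl w11" "Wl T6" "Wl T9" "Wl T15"
  unfolding w3_def w5_def w7_def w11_def T6_def T9_def T15_def by code_simp+

lemma chk_all: "chk []" "chk T6" "chk T9" "chk T15"
  unfolding T6_def T9_def T15_def by code_simp+

lemma rng_all: "list_all (\<lambda>x. 4 \<le> x \<and> x \<le> 6) w3" "list_all (\<lambda>x. 4 \<le> x \<and> x \<le> 8) w5"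
  "list_all (\<lambda>x. 4 \<le> x \<and> x \<le> 8) w7" "list_all (\<lambda>x. 4 \<le> x \<and> x \<le> 8) w11"
  "list_all (\<lambda>x. 4 \<le> x \<and> x \<le> 7) T6" "list_all (\<lambda>x. 4 \<le> x \<and> x \<le> 7) T9"
  "list_all (\<lambda>x. 4 \<le> x \<and> x \<le> 7) T15"
  unfolding w3_def w5_def w7_def w11_def T6_def T9_def T15_def by code_simp+

lemma lens: "length w3 = 3" "length w5 = 5" "length w7 = 7" "length w11 = 11"
  "length T6 = 6" "length T9 = 9" "length T15 = 15"
  unfolding w3_def w5_def w7_def w11_def T6_def T9_def T15_def by simp_all

definition tailw :: "nat \<Rightarrow> nat list" where
  "tailw n = (if n mod 4 = 0 then [] else if n mod 4 = 1 then T9 else if n mod 4 = 2 then T6 else T15)"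

definition cc :: "nat \<Rightarrow> nat \<Rightarrow> nat" where
  "cc n i = (if n = 3 then w3!i else if n = 5 then w5!i else if n = 7 then w7!i
     else if n = 11 then w11!i else if n = 6 then T6!i else if n = 9 then T9!i
     else if n = 15 then T15!i else colf (tailw n) i)"

definition Kb :: "nat \<Rightarrow> nat" where
  "Kb n = (if n = 3 then 6 else if n \<in> {5, 7, 11} then 8 else 7)"

lemma generic_n:
  assumes "n \<ge> 3" "n \<notin> {3,5,7,11,6,9,15}"
  shows "\<exists>k\<ge>1. n = length (tailw n) + 4*k"
proof -
  have "n mod 4 = 0 \<or> n mod 4 = 1 \<or> n mod 4 = 2 \<or> n mod 4 = 3" by auto
  then show ?thesis
  proof (elim disjE)
    assume h: "n mod 4 = 0"
    then have "n = 0 + 4 * (n div 4)" by auto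
    moreover have "n div 4 \<ge> 1" using assms by auto
    ultimately show ?thesis using h by (auto simp: tailw_def)
  next
    assume h: "n mod 4 = 1"
    then have "n \<ge> 13" using assms by (simp; presburger)
    then have "n = 9 + 4 * ((n - 9) div 4)" using h by presburger
    moreover have "(n - 9) div 4 \<ge> 1" using \<open>n \<ge> 13\<close> by auto
    ultimately show ?thesis using h by (auto simp: tailw_def lens)
  next
    assume h: "n mod 4 = 2"
    then have "n \<ge> 10" using assms by (simp; presburger)
    then have "n = 6 + 4 * ((n - 6) div 4)" using h by presburger
    moreover have "(n - 6) div 4 \<ge> 1" using \<open>n \<ge> 10\<close> by auto
    ultimately show ?thesis using h by (auto simp: tailw_def lens)
  next
    assume h: "n mod 4 = 3"
    then have "n \<ge> 19" using assms by (simp; presburger)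
    then have "n = 15 + 4 * ((n - 15) div 4)" using h by presburger
    moreover have "(n - 15) div 4 \<ge> 1" using \<open>n \<ge> 19\<close> by auto
    ultimately show ?thesis using h by (auto simp: tailw_def lens)
  qed
qed

lemma ccs: "cc 3 = (!) w3" "cc 5 = (!) w5" "cc 7 = (!) w7" "cc 11 = (!) w11"
  "cc 6 = (!) T6" "cc 9 = (!) T9" "cc 15 = (!) T15"
  by (simp_all add: cc_def fun_eq_iff)

lemma cc_Wp: assumes "n \<ge> 3" shows "Wp n (cc n)"
proof -
  have e: "Wp n (cc n) = Wp n (\<lambda>i. w!i)" if "cc n = (\<lambda>i. w!i)" for w using that by simp
  show ?thesis
  proof (cases "n \<in> {3,5,7,11,6,9,15}")
    case True
    then show ?thesis
      using Wl_Wp[OF Wl_all(1)] Wl_Wp[OF Wl_all(2)] Wl_Wp[OF Wl_all(3)] Wl_Wp[OF Wl_all(4)]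
        Wl_Wp[OF Wl_all(5)] Wl_Wp[OF Wl_all(6)] Wl_Wp[OF Wl_all(7)]
      by (auto simp: ccs lens)
  next
    case False
    then obtain k where k: "k \<ge> 1" "n = length (tailw n) + 4*k" using generic_n assms by blast
    have ch: "chk (tailw n)" using chk_all by (simp add: tailw_def)
    have "cc n = colf (tailw n)" using False by (auto simp: cc_def fun_eq_iff)
    then show ?thesis using chk_Wp[OF ch k(1)] k(2) by simp
  qed
qed

lemma cc_rng: assumes "n \<ge> 3" "a < n" shows "4 \<le> cc n a \<and> cc n a \<le> Kb n"
proof (cases "n \<in> {3,5,7,11,6,9,15}")
  case True
  have r: "\<And>w::nat list. \<And>P. list_all P w \<Longrightarrow> a < length w \<Longrightarrow> P (w!a)"
    by (simp add: list_all_length)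
  from True show ?thesis
    using r[OF rng_all(1)] r[OF rng_all(2)] r[OF rng_all(3)] r[OF rng_all(4)]
      r[OF rng_all(5)] r[OF rng_all(6)] r[OF rng_all(7)] assms
    by (auto simp: cc_def Kb_def lens)
next
  case False
  have ch: "chk (tailw n)" using chk_all by (simp add: tailw_def)
  then have "\<forall>x\<in>set (tailw n). 4 \<le> x \<and> x \<le> 7" by (simp add: chk_def list_all_iff)
  then have "4 \<le> colf (tailw n) a \<and> colf (tailw n) a \<le> 7"
    by (auto simp: colf_def)
  moreover have "Kb n \<ge> 7" using False by (simp add: Kb_def)
  ultimately show ?thesis using False by (auto simp: cc_def)
qed



lemma cyc_pos:
  assumes W: "Wp n f" and ab: "a < n" "b < n" "a \<noteq> b" "f a = f b"
    and d: "1 \<le> d" "d \<le> 4" and e: "int b - int a - d = int n * z"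
  shows "f a < 2 * nat d"
proof -
  have "int b = (int a + d) + int n * z" using e by (simp add: algebra_simps)
  then have "int b mod int n = (int a + d) mod int n" by simp
  moreover have "int b mod int n = int b" using ab by simp
  moreover have "int ((a + nat d) mod n) = (int a + d) mod int n" using d by (simp add: zmod_int)
  ultimately have bm: "b = (a + nat d) mod n" by linarith
  have "1 \<le> nat d \<and> nat d \<le> 4" using d by linarith
  then show ?thesis using W ab bm unfolding Wp_def by metis
qed

lemma cyc_good:
  assumes W: "Wp n f" and r: "\<forall>a<n. f a \<le> 8" and ab: "a < n" "b < n" "a \<noteq> b" "f a = f b"
    and e: "int b - int a - d = int n * z"
  shows "int (f a) < 2 * \<bar>d\<bar>"
proof -
  consider "\<bar>d\<bar> \<ge> 5" | "d = 0" | "1 \<le> d \<and> d \<le> 4" | "-4 \<le> d \<and> d \<le> -1" by linarith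
  then show ?thesis
  proof cases
    case 1 then show ?thesis using r ab by force
  next
    case 2
    then have eq: "int b - int a = int n * z" using e by simp
    have "z = 0"
    proof (rule ccontr)
      assume "z \<noteq> 0"
      then have "\<bar>int n * z\<bar> \<ge> int n" by (simp add: abs_mult mult_le_cancel_left1; linarith)
      moreover have "\<bar>int b - int a\<bar> < int n" using ab by linarith
      ultimately show False using eq by simp
    qed
    then show ?thesis using eq ab by simp
  next
    case 3
    then have "f a < 2 * nat d" using cyc_pos[OF W ab] e by auto
    then show ?thesis using 3 by linarith
  next
    case 4
    have e': "int a - int b - (-d) = int n * (-z)" using e by simp
    have "f b < 2 * nat (-d)" using cyc_pos[OF W ab(2) ab(1) _ _ _ _ e'] ab 4 by auto
    then show ?thesis using 4 ab by linarith
  qed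
qed

lemma gdist_gt:
  assumes "\<And>l. walk_of_len G u v l \<Longrightarrow> i < l"
  shows "enat i < gdist G u v"
proof -
  have "enat (Suc i) \<le> gdist G u v"
    unfolding gdist_def by (rule INF_greatest) (use assms in \<open>auto simp: Suc_le_eq\<close>)
  then show ?thesis by (metis Suc_ile_eq order_refl)
qed

lemma walkD:
  assumes "walk_of_len G u v l"
  obtains xs where "length xs = Suc l" "set xs \<subseteq> verts G" "xs!0 = u" "xs!l = v"
    "\<And>i. i < l \<Longrightarrow> adj G (xs!i) (xs!Suc i)"
proof -
  obtain xs where h: "length xs = Suc l" "set xs \<subseteq> verts G" "hd xs = u" "last xs = v"
     "\<forall>i<l. adj G (xs ! i) (xs ! Suc i)" using assms unfolding walk_of_len_def by blast
  have "xs \<noteq> []" using h by auto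
  then have "xs!0 = u" "xs!l = v" using h by (auto simp: hd_conv_nth last_conv_nth)
  then show ?thesis using that h by blast
qed

lemma adjF: "adj (fssd m G) u v \<longleftrightarrow> (\<exists>x y j. x \<in> verts G \<and> y \<in> verts G \<and> adj G x y \<and> j < m \<and>
        ((u = Inl x \<and> v = Inr ({x, y}, j)) \<or> (v = Inl x \<and> u = Inr ({x, y}, j))))"
  by (simp add: adj_def fssd_def)

lemma vertsF: "verts (fssd m G) = Inl ` verts G \<union> {Inr ({x, y}, j) | x y j. x \<in> verts G \<and> y \<in> verts G \<and> adj G x y \<and> j < m}"
  by (simp add: verts_def fssd_def)

lemma adjF_side: "adj (fssd m G) u v \<Longrightarrow> (\<exists>x. u = Inl x) \<longleftrightarrow> (\<exists>e. v = Inr e)"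
  unfolding adjF by auto

lemma adjF_two:
  assumes "adj (fssd m G) (Inl x) s" "adj (fssd m G) s (Inl y)" "x \<noteq> y"
  shows "adj G x y"
proof -
  from assms(1) obtain y1 j where s: "s = Inr ({x, y1}, j)" "adj G x y1" unfolding adjF by auto
  from assms(2) obtain y2 j2 where s2: "s = Inr ({y, y2}, j2)" "adj G y y2" unfolding adjF by auto
  have "{x, y1} = {y, y2}" using s s2 by simp
  then have "y1 = y" using assms(3) by (auto simp: doubleton_eq_iff)
  then show ?thesis using s by simp
qed



abbreviation GG :: "nat \<Rightarrow> nat \<Rightarrow> (nat + nat \<times> nat) graph" where
  "GG n p \<equiv> nbhd_corona (cycle_graph n) (path_graph p)"

lemma vertsG: "verts (GG n p) = Inl ` {0..<n} \<union> Inr ` ({0..<n} \<times> {0..<p})"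
  by (simp add: nbhd_corona_def verts_def cycle_graph_def path_graph_def)

lemma adjG: "adj (GG n p) x y \<longleftrightarrow>
   (\<exists>a b. x = Inl a \<and> y = Inl b \<and> a < n \<and> b < n \<and> (b = Suc a mod n \<or> a = Suc b mod n))
 \<or> (\<exists>a i h. x = Inl a \<and> y = Inr (i, h) \<and> a < n \<and> i < n \<and> h < p \<and> (i = Suc a mod n \<or> a = Suc i mod n))
 \<or> (\<exists>a i h. y = Inl a \<and> x = Inr (i, h) \<and> a < n \<and> i < n \<and> h < p \<and> (i = Suc a mod n \<or> a = Suc i mod n))
 \<or> (\<exists>i h h'. x = Inr (i, h) \<and> y = Inr (i, h') \<and> i < n \<and> h < p \<and> h' < p \<and> (h' = Suc h \<or> h = Suc h'))"
  by (simp add: nbhd_corona_def adj_def verts_def cycle_graph_def path_graph_def) blast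

definition near :: "int \<Rightarrow> int \<Rightarrow> int \<Rightarrow> bool" where
  "near N x y \<longleftrightarrow> (\<exists>t z. \<bar>t\<bar> \<le> 1 \<and> x - y = t + N * z)"

fun posO :: "nat + nat \<times> nat \<Rightarrow> int" where
  "posO (Inl a) = 2 * int a"
| "posO (Inr (i, h)) = 2 * int i"

fun posF :: "nat \<Rightarrow> (nat + nat \<times> nat) + (nat + nat \<times> nat) set \<times> nat \<Rightarrow> int" where
  "posF n (Inl x) = posO x"
| "posF n (Inr (e, j)) = (SOME q. \<forall>x\<in>e. near (2 * int n) (posO x) q)"

lemma cyc_near:
  assumes "a < n" "b < n" "b = Suc a mod n \<or> a = Suc b mod n"
  shows "\<exists>q. near (2 * int n) (2 * int a) q \<and> near (2 * int n) (2 * int b) q"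
proof -
  have one: "near (2 * int n) (2 * int a) (2 * int a + 1) \<and> near (2 * int n) (2 * int b) (2 * int a + 1)"
    if "a < n" "b < n" "b = Suc a mod n" for a b
  proof -
    have A: "near (2 * int n) (2 * int a) (2 * int a + 1)"
      unfolding near_def by (rule exI[of _ "-1"], rule exI[of _ 0]) simp
    show ?thesis
    proof (cases "Suc a < n")
      case True
      then have "b = Suc a" using that by simp
      then have "near (2 * int n) (2 * int b) (2 * int a + 1)"
        unfolding near_def by (intro exI[of _ 1] exI[of _ 0]) simp
      then show ?thesis using A by simp
    next
      case False
      then have "Suc a = n" using that by simp
      then have "b = 0" using that by simp
      then have "near (2 * int n) (2 * int b) (2 * int a + 1)"
        unfolding near_def using \<open>Suc a = n\<close> by (intro exI[of _ 1] exI[of _ "-1"]) auto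
      then show ?thesis using A by simp
    qed
  qed
  from assms(3) show ?thesis
  proof
    assume "b = Suc a mod n" then show ?thesis using one[OF assms(1,2)] by blast
  next
    assume "a = Suc b mod n" then show ?thesis using one[OF assms(2,1)] by blast
  qed
qed

lemma edge_near:
  assumes "adj (GG n p) x y"
  shows "\<exists>q. \<forall>w\<in>{x, y}. near (2 * int n) (posO w) q"
proof -
  have refl: "near N v v" for N v unfolding near_def by (intro exI[of _ 0]) simp
  from assms[unfolded adjG] consider
      (c1) a b where "x = Inl a" "y = Inl b" "a < n" "b < n" "b = Suc a mod n \<or> a = Suc b mod n"
    | (c2) a i h where "x = Inl a" "y = Inr (i, h)" "a < n" "i < n" "i = Suc a mod n \<or> a = Suc i mod n"
    | (c3) a i h where "y = Inl a" "x = Inr (i, h)" "a < n" "i < n" "i = Suc a mod n \<or> a = Suc i mod n"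
    | (c4) i h h' where "x = Inr (i, h)" "y = Inr (i, h')"
    by blast
  then show ?thesis
  proof cases
    case (c1 a b)
    then show ?thesis using cyc_near[of a n b] by auto
  next
    case (c2 a i h)
    then show ?thesis using cyc_near[of a n i] by auto
  next
    case (c3 a i h)
    then show ?thesis using cyc_near[of a n i] by auto
  next
    case (c4 i h h')
    then show ?thesis using refl by auto
  qed
qed

lemma step_near:
  assumes "adj (fssd m (GG n p)) u v"
  shows "near (2 * int n) (posF n v) (posF n u)"
proof -
  from assms[unfolded adjF] obtain x y j where xy: "adj (GG n p) x y"
     and c: "(u = Inl x \<and> v = Inr ({x, y}, j)) \<or> (v = Inl x \<and> u = Inr ({x, y}, j))" by blast
  have "\<forall>w\<in>{x, y}. near (2 * int n) (posO w) (SOME q. \<forall>w\<in>{x, y}. near (2 * int n) (posO w) q)"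
    using someI_ex[OF edge_near[OF xy]] .
  then have h: "near (2 * int n) (posO x) (posF n (Inr ({x, y}, j)))" by simp
  have sym: "near N b a" if "near N a b" for N a b
  proof -
    from that obtain t z where "\<bar>t\<bar> \<le> 1" "a - b = t + N * z" unfolding near_def by blast
    then show ?thesis unfolding near_def by (intro exI[of _ "-t"] exI[of _ "-z"]) auto
  qed
  from c show ?thesis
  proof
    assume "u = Inl x \<and> v = Inr ({x, y}, j)" then show ?thesis using sym[OF h] by simp
  next
    assume "v = Inl x \<and> u = Inr ({x, y}, j)" then show ?thesis using h by simp
  qed
qed

lemma walk_near:
  assumes "walk_of_len (fssd m (GG n p)) u v l"
  shows "\<exists>e z. \<bar>e\<bar> \<le> int l \<and> posF n v - posF n u = e + 2 * int n * z"
proof -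
  obtain xs where xs: "length xs = Suc l" "xs!0 = u" "xs!l = v"
    "\<And>i. i < l \<Longrightarrow> adj (fssd m (GG n p)) (xs!i) (xs!Suc i)" using walkD[OF assms] by blast
  have "i \<le> l \<Longrightarrow> \<exists>e z. \<bar>e\<bar> \<le> int i \<and> posF n (xs!i) - posF n (xs!0) = e + 2 * int n * z" for i
  proof (induction i)
    case 0 then show ?case by (intro exI[of _ 0]) simp
  next
    case (Suc i)
    then obtain e z where ez: "\<bar>e\<bar> \<le> int i" "posF n (xs!i) - posF n (xs!0) = e + 2 * int n * z" by auto
    from step_near[OF xs(4)[of i]] Suc.prems obtain t z' where
      tz: "\<bar>t\<bar> \<le> 1" "posF n (xs!Suc i) - posF n (xs!i) = t + 2 * int n * z'"
      unfolding near_def by auto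
    show ?case
      by (rule exI[of _ "e + t"], rule exI[of _ "z + z'"]) (use ez tz in \<open>auto simp: algebra_simps\<close>)
  qed
  from this[of l] show ?thesis using xs by simp
qed



lemma adjF_isl: "adj (fssd m G) u w \<Longrightarrow> isl u \<longleftrightarrow> \<not> isl w"
  unfolding adjF by auto

lemma L1:
  assumes "u = Inr e1" "v = Inr e2" "u \<noteq> v"
  shows "enat 1 < gdist (fssd m G) u v"
proof (rule gdist_gt)
  fix l assume w: "walk_of_len (fssd m G) u v l"
  obtain xs where xs: "xs!0 = u" "xs!l = v"
    "\<And>i. i < l \<Longrightarrow> adj (fssd m G) (xs!i) (xs!Suc i)" using walkD[OF w] by blast
  show "1 < l"
  proof (rule ccontr)
    assume "\<not> 1 < l"
    then have "l = 0 \<or> l = 1" by auto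
    then show False
    proof
      assume "l = 0" then show False using xs assms by simp
    next
      assume "l = 1" then show False using adjF_isl[OF xs(3)[of 0]] xs assms by simp
    qed
  qed
qed

lemma L23:
  assumes u: "u = Inl (Inr (a, h))" and v: "v = Inl (Inr (a', h'))" and "u \<noteq> v"
    and par: "h mod 2 = h' mod 2"
  shows "enat 3 < gdist (fssd m (GG n p)) u v"
proof (rule gdist_gt)
  fix l assume w: "walk_of_len (fssd m (GG n p)) u v l"
  obtain xs where xs: "xs!0 = u" "xs!l = v"
    "\<And>i. i < l \<Longrightarrow> adj (fssd m (GG n p)) (xs!i) (xs!Suc i)" using walkD[OF w] by blast
  show "3 < l"
  proof (rule ccontr)
    assume "\<not> 3 < l"
    then have "l = 0 \<or> l = 1 \<or> l = 2 \<or> l = 3" by auto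
    then show False
    proof (elim disjE)
      assume "l = 0" then show False using xs assms by simp
    next
      assume "l = 1" then show False using adjF_isl[OF xs(3)[of 0]] xs assms by simp
    next
      assume l: "l = 2"
      have a1: "adj (fssd m (GG n p)) (Inl (Inr (a, h))) (xs!1)" using xs(3)[of 0] xs(1) l u by simp
      have a2: "adj (fssd m (GG n p)) (xs!1) (Inl (Inr (a', h')))" using xs(3)[of 1] xs(2) l v
        by (simp add: numeral_2_eq_2)
      have "Inr (a, h) \<noteq> (Inr (a', h') :: nat + nat \<times> nat)" using assms by auto
      from adjF_two[OF a1 a2 this] have "adj (GG n p) (Inr (a, h)) (Inr (a', h'))" .
      then have "h' = Suc h \<or> h = Suc h'" unfolding adjG by auto
      then show False using par by presburger
    next
      assume l: "l = 3"
      have "isl (xs!0)" using xs u by simp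
      then have "\<not> isl (xs!1)" using adjF_isl[OF xs(3)[of 0]] l by simp
      then have "isl (xs!2)" using adjF_isl[OF xs(3)[of 1]] l by (simp add: numeral_2_eq_2)
      then have "\<not> isl (xs!3)" using adjF_isl[OF xs(3)[of 2]] l by (simp add: numeral_3_eq_3 numeral_2_eq_2)
      then show False using xs l v by simp
    qed
  qed
qed

lemma L4:
  assumes n: "n \<ge> 3" and ab: "a < n" "b < n" "a \<noteq> b" "cc n a = cc n b"
  shows "enat (cc n a) < gdist (fssd m (GG n p)) (Inl (Inl a)) (Inl (Inl b))"
proof (rule gdist_gt)
  fix l assume "walk_of_len (fssd m (GG n p)) (Inl (Inl a)) (Inl (Inl b)) l"
  from walk_near[OF this] obtain e z where ez: "\<bar>e\<bar> \<le> int l"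
    "2 * int b - 2 * int a = e + 2 * int n * z" by auto
  define d where "d = int b - int a - int n * z"
  have ed: "e = 2 * d" using ez(2) unfolding d_def by (simp add: algebra_simps)
  have r: "\<forall>a<n. cc n a \<le> 8"
  proof (intro allI impI)
    fix a assume "a < n"
    then have "cc n a \<le> Kb n" using cc_rng[OF n] by blast
    moreover have "Kb n \<le> 8" by (simp add: Kb_def)
    ultimately show "cc n a \<le> 8" by linarith
  qed
  have "int (cc n a) < 2 * \<bar>d\<bar>"
    by (rule cyc_good[OF cc_Wp[OF n] r ab, of d z]) (simp add: d_def)
  then show "cc n a < l" using ez(1) ed by linarith
qed

lemma vcases:
  assumes "v \<in> verts (fssd m (GG n p))"
  shows "(\<exists>e. v = Inr e) \<or> (\<exists>i h. v = Inl (Inr (i, h))) \<or> (\<exists>a<n. v = Inl (Inl a))"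
  using assms unfolding vertsF vertsG by auto

theorem theorem2:
  fixes n m p :: nat
  assumes "n \<ge> 3" and "m \<ge> 1" and "p \<ge> 2"
  shows "packing_chromatic_number (fssd m (nbhd_corona (cycle_graph n) (path_graph p)))
           \<le> (if n = 3 then 6 else if n \<in> {5, 7, 11} then 8 else 7)"
proof -
  define F where "F = fssd m (GG n p)"
  define c where "c = (\<lambda>v::(nat + nat \<times> nat) + (nat + nat \<times> nat) set \<times> nat.
     case v of Inr _ \<Rightarrow> 1 | Inl (Inr (i, h)) \<Rightarrow> 2 + h mod 2 | Inl (Inl w) \<Rightarrow> cc n w)"
  have K6: "Kb n \<ge> 6" by (simp add: Kb_def)
  have col: "c v \<in> {1..Kb n}" if "v \<in> verts F" for v
  proof -
    from vcases[OF that[unfolded F_def]] show ?thesis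
    proof (elim disjE exE conjE)
      fix e assume "v = Inr e" then show ?thesis using K6 by (simp add: c_def)
    next
      fix i h assume "v = Inl (Inr (i, h))" then show ?thesis using K6 by (simp add: c_def)
    next
      fix a assume a: "a < n" "v = Inl (Inl a)" then show ?thesis using cc_rng[OF assms(1) a(1)] by (simp add: c_def)
    qed
  qed
  have pk: "enat i < gdist F u v" if "u \<in> verts F" "v \<in> verts F" "c u = i" "c v = i" "u \<noteq> v" for u v i
  proof -
    from vcases[OF that(1)[unfolded F_def]] show ?thesis
    proof (elim disjE exE conjE)
      fix e assume u: "u = Inr e"
      then have i: "i = 1" using that by (simp add: c_def)
      from vcases[OF that(2)[unfolded F_def]] show ?thesis
      proof (elim disjE exE conjE)
        fix e' assume v: "v = Inr e'"
        show ?thesis using L1[OF u v that(5)] i by (simp add: F_def)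
      next
        fix i' h' assume "v = Inl (Inr (i', h'))" then show ?thesis using that u by (simp add: c_def)
      next
        fix b assume "b < n" "v = Inl (Inl b)" then show ?thesis using that u cc_rng[OF assms(1), of b] by (simp add: c_def)
      qed
    next
      fix a h assume u: "u = Inl (Inr (a, h))"
      then have i: "i = 2 + h mod 2" using that by (simp add: c_def)
      from vcases[OF that(2)[unfolded F_def]] show ?thesis
      proof (elim disjE exE conjE)
        fix e' assume v: "v = Inr e'" then show ?thesis using that u by (simp add: c_def)
      next
        fix a' h' assume v: "v = Inl (Inr (a', h'))"
        then have "h mod 2 = h' mod 2" using that u by (simp add: c_def)
        from L23[OF u v that(5) this, of m n p] have "enat 3 < gdist F u v" by (simp add: F_def)
        moreover have "i \<le> 3" using i by simp
        ultimately show ?thesis by (meson enat_ord_simps(1) le_less_trans)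
      next
        fix b assume b: "b < n" and v: "v = Inl (Inl b)"
        have "h mod 2 < 2" by simp
        have "4 \<le> cc n b" using cc_rng[OF assms(1) b] by simp
        moreover have "cc n b = i" using that v by (simp add: c_def)
        ultimately have False using i \<open>h mod 2 < 2\<close> by linarith
        then show ?thesis ..
      qed
    next
      fix a assume a: "a < n" and u: "u = Inl (Inl a)"
      from vcases[OF that(2)[unfolded F_def]] show ?thesis
      proof (elim disjE exE conjE)
        fix e' assume v: "v = Inr e'" then show ?thesis using that u cc_rng[OF assms(1) a] by (simp add: c_def)
      next
        fix a' h' assume v: "v = Inl (Inr (a', h'))"
        have "h' mod 2 < 2" by simp
        have "4 \<le> cc n a" using cc_rng[OF assms(1) a] by simp
        moreover have "cc n a = i" "2 + h' mod 2 = i" using that u v by (simp_all add: c_def)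
        ultimately have False using \<open>h' mod 2 < 2\<close> by linarith
        then show ?thesis ..
      next
        fix b assume b: "b < n" and v: "v = Inl (Inl b)"
        have "a \<noteq> b" "cc n a = cc n b" "i = cc n a" using that u v by (auto simp: c_def)
        then show ?thesis using L4[OF assms(1) a b, of m p] u v by (simp add: F_def)
      qed
    qed
  qed
  have "packing_coloring F (Kb n) c"
    unfolding packing_coloring_def is_packing_def using col pk by auto
  then have "packing_chromatic_number F \<le> Kb n"
    unfolding packing_chromatic_number_def by (intro Least_le) blast
  then show ?thesis by (simp add: F_def Kb_def)
qed


end
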